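(* Let $A\in\mathcal{C}_n$ have unit diagonal. Let $I_1,\dots,I_m$ be the elements of $\mathcal{I}=\operatorname{Supp}(\mathcal{M}(A))$ ordered by nondecreasing cardinality (each has cardinality at least 2), and let $m_2$ be the number with cardinality 2. Let $G_2(\mathcal{I})$ be the graph with vertex set $\{1,\dots,n\}$ and edges $I_1,\dots,I_{m_2}$, and let $G_{>2}(\mathcal{I})$ be the bipartite graph with vertex classes $V=\{1,\dots,n\}$, $W=\{m_2+1,\dots,m\}$, in which $(v,w)\in V\times W$ is an edge iff $v\in I_w$. Let $G_{2,1},\dots,G_{2,r}$ be the connected components of $G_2(\mathcal{I})$ which are bipartite. If the linear span of $\mathcal{M}(A)$ is $\mathbb{R}^n$, then there exist edges $(v_1,w_1),\dots,(v_r,w_r)$ of $G_{>2}(\mathcal{I})$ such that $v_j$ is a vertex of $G_{2,j}$ for all $j=1,\dots,r$ and $w_1,\dots,w_r$ are mutually different.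
   Context: $\mathcal{C}_n$ denotes the cone of copositive matrices: real symmetric $n\times n$ matrices $A$ with $x^TAx\ge 0$ for all $x\in\mathbb{R}^n_+$. A zero of $A$ is a nonzero $u\in\mathbb{R}^n_+$ with $u^TAu=0$; $\operatorname{Supp}(u)=\{i:u_i\ne0\}$; a zero $u$ is minimal if there is no zero $v$ with $\operatorname{Supp}(v)\subsetneq\operatorname{Supp}(u)$; $\mathcal{M}(A)$ is the set of minimal zeros and $\operatorname{Supp}(\mathcal{M}(A))=\{\operatorname{Supp}(u):u\in\mathcal{M}(A)\}$. *)

theory Defs
  imports "HOL-Analysis.Analysis"
begin

definition copositive :: "real^'n^'n \<Rightarrow> bool" where
  "copositive A \<longleftrightarrow> transpose A = A \<and>
     (\<forall>x::real^'n. (\<forall>i. 0 \<le> x$i) \<longrightarrow> 0 \<le> x \<bullet> (A *v x))"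

definition supp :: "real^'n \<Rightarrow> 'n set" where
  "supp u = {i. u$i \<noteq> 0}"

definition is_zero :: "real^'n^'n \<Rightarrow> real^'n \<Rightarrow> bool" where
  "is_zero A u \<longleftrightarrow> u \<noteq> 0 \<and> (\<forall>i. 0 \<le> u$i) \<and> u \<bullet> (A *v u) = 0"

definition minimal_zeros :: "real^'n^'n \<Rightarrow> (real^'n) set" where
  "minimal_zeros A = {u. is_zero A u \<and> \<not> (\<exists>v. is_zero A v \<and> supp v \<subset> supp u)}"

definition supp_minimal_zeros :: "real^'n^'n \<Rightarrow> 'n set set" where
  "supp_minimal_zeros A = supp ` minimal_zeros A"

definition G2_adj :: "'n set set \<Rightarrow> 'n \<Rightarrow> 'n \<Rightarrow> bool" where
  "G2_adj \<I> i j \<longleftrightarrow> {i, j} \<in> \<I> \<and> card {i, j} = 2"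

definition G2_component :: "'n set set \<Rightarrow> 'n \<Rightarrow> 'n set" where
  "G2_component \<I> v = {u. (G2_adj \<I>)\<^sup>*\<^sup>* v u}"

definition G2_components :: "'n set set \<Rightarrow> 'n set set" where
  "G2_components \<I> = range (G2_component \<I>)"

definition G2_bipartite :: "'n set set \<Rightarrow> 'n set \<Rightarrow> bool" where
  "G2_bipartite \<I> C \<longleftrightarrow> (\<exists>c :: 'n \<Rightarrow> bool.
      \<forall>i\<in>C. \<forall>j\<in>C. G2_adj \<I> i j \<longrightarrow> c i \<noteq> c j)"

definition G2_bipartite_components :: "'n set set \<Rightarrow> 'n set set" where
  "G2_bipartite_components \<I> = {C \<in> G2_components \<I>. G2_bipartite \<I> C}"

end

theory Submission
  imports Defs
begin


lemma hall_aux: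
  "\<And>K N. card K = k \<Longrightarrow> finite K \<Longrightarrow> (\<forall>C\<in>K. finite (N C)) \<Longrightarrow>
   (\<forall>S\<subseteq>K. card S \<le> card (\<Union>(N ` S))) \<Longrightarrow>
   \<exists>f. inj_on f K \<and> (\<forall>C\<in>K. f C \<in> N C)"
proof (induction k rule: less_induct)
  case (less k K N)
  show ?case
  proof (cases "K = {}")
    case True then show ?thesis by auto
  next
    case Kne: False
    have finU: "\<And>S. S \<subseteq> K \<Longrightarrow> finite (\<Union>(N ` S))"
      using less.prems by (meson UN_iff finite_UN_I finite_subset subsetD)
    show ?thesis
    proof (cases "\<exists>S0. S0 \<noteq> {} \<and> S0 \<subset> K \<and> card S0 = card (\<Union>(N ` S0))")
      case False
      then have strict: "\<And>S. S \<noteq> {} \<Longrightarrow> S \<subset> K \<Longrightarrow> card S < card (\<Union>(N ` S))"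
        using less.prems(4) by (metis le_neq_implies_less psubset_imp_subset)
      obtain a where a: "a \<in> K" using Kne by auto
      have "card {a} \<le> card (N a)" using less.prems(4)[rule_format, of "{a}"] a by simp
      then have "N a \<noteq> {}" by auto
      then obtain x where x: "x \<in> N a" by auto
      define K' where "K' = K - {a}"
      define N' where "N' = (\<lambda>C. N C - {x})"
      have cK': "card K' < k" using less.prems(1,2) a K'_def
        by (metis card_Diff1_less)
      have hall': "\<forall>S\<subseteq>K'. card S \<le> card (\<Union>(N' ` S))"
      proof (intro allI impI)
        fix S assume S: "S \<subseteq> K'"
        show "card S \<le> card (\<Union>(N' ` S))"
        proof (cases "S = {}")
          case True then show ?thesis by simp
        next
          case False
          have "S \<subset> K" using S a K'_def by auto
          then have "card S < card (\<Union>(N ` S))" using strict False by auto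
          moreover have "\<Union>(N' ` S) = \<Union>(N ` S) - {x}" unfolding N'_def by auto
          moreover have "finite (\<Union>(N ` S))" using finU \<open>S \<subset> K\<close> by auto
          ultimately show ?thesis by (simp add: card_Diff_singleton_if) linarith
        qed
      qed
      obtain f where f: "inj_on f K'" "\<forall>C\<in>K'. f C \<in> N' C"
        using less.IH[OF cK' refl _ _ hall'] less.prems(2,3) K'_def N'_def by auto
      define g where "g = f(a := x)"
      have "inj_on g K"
      proof -
        have "inj_on g K'" using f(1) unfolding g_def K'_def by (simp add: inj_on_def)
        moreover have "g a \<notin> g ` K'" using f(2) unfolding g_def N'_def K'_def by auto
        moreover have "K = insert a K'" "a \<notin> K'" using a K'_def by auto
        ultimately show ?thesis by (simp del: fun_upd_apply)
      qed
      moreover have "\<forall>C\<in>K. g C \<in> N C" using f(2) x unfolding g_def N'_def K'_def by auto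
      ultimately show ?thesis by blast
    next
      case True
      then obtain S0 where S0: "S0 \<noteq> {}" "S0 \<subset> K" "card S0 = card (\<Union>(N ` S0))" by blast
      have fS0: "finite S0" using S0(2) less.prems(2) finite_subset by auto
      have c1: "card S0 < k" using S0(2) less.prems(1,2) psubset_card_mono by blast
      obtain f1 where f1: "inj_on f1 S0" "\<forall>C\<in>S0. f1 C \<in> N C"
        using less.IH[OF c1 refl fS0, of N] less.prems(3,4) S0(2) by auto
      define K2 where "K2 = K - S0"
      define M0 where "M0 = \<Union>(N ` S0)"
      define N2 where "N2 = (\<lambda>C. N C - M0)"
      have c2: "card K2 < k"
      proof -
        have "K2 \<subset> K" using S0(1,2) K2_def by auto
        then show ?thesis using less.prems(1,2) psubset_card_mono by blast
      qed
      have hall2: "\<forall>T\<subseteq>K2. card T \<le> card (\<Union>(N2 ` T))"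
      proof (intro allI impI)
        fix T assume T: "T \<subseteq> K2"
        have TS: "T \<union> S0 \<subseteq> K" using T K2_def S0(2) by auto
        have fT: "finite T" using T K2_def less.prems(2) finite_subset by blast
        have disj: "T \<inter> S0 = {}" using T K2_def by auto
        have "card T + card S0 = card (T \<union> S0)" using fT fS0 disj by (simp add: card_Un_disjoint)
        also have "\<dots> \<le> card (\<Union>(N ` (T \<union> S0)))" using less.prems(4) TS by blast
        also have "\<Union>(N ` (T \<union> S0)) = \<Union>(N2 ` T) \<union> M0" unfolding N2_def M0_def by auto
        also have "card (\<Union>(N2 ` T) \<union> M0) = card (\<Union>(N2 ` T)) + card M0"
        proof (rule card_Un_disjoint)
          show "finite (\<Union>(N2 ` T))" using finU[of T] T K2_def unfolding N2_def by auto
          show "finite M0" using finU[of S0] S0(2) M0_def by auto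
          show "\<Union>(N2 ` T) \<inter> M0 = {}" unfolding N2_def by auto
        qed
        finally show "card T \<le> card (\<Union>(N2 ` T))" using S0(3) M0_def by simp
      qed
      obtain f2 where f2: "inj_on f2 K2" "\<forall>C\<in>K2. f2 C \<in> N2 C"
        using less.IH[OF c2 refl _ _ hall2] less.prems(2,3) K2_def N2_def by auto
      define g where "g = (\<lambda>C. if C \<in> S0 then f1 C else f2 C)"
      have "inj_on g K"
      proof (rule inj_onI)
        fix x y assume xy: "x \<in> K" "y \<in> K" "g x = g y"
        show "x = y"
        proof (cases "x \<in> S0"; cases "y \<in> S0")
          assume "x \<in> S0" "y \<in> S0" then show ?thesis using xy f1(1) g_def by (auto dest: inj_onD)
        next
          assume "x \<notin> S0" "y \<notin> S0" then show ?thesis using xy f2(1) g_def K2_def by (auto dest: inj_onD)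
        next
          assume "x \<in> S0" "y \<notin> S0"
          then have "g x \<in> M0" "g y \<notin> M0" using f1(2) f2(2) xy(1,2) K2_def g_def M0_def N2_def by auto
          then show ?thesis using xy by simp
        next
          assume "x \<notin> S0" "y \<in> S0"
          then have "g y \<in> M0" "g x \<notin> M0" using f1(2) f2(2) xy(1,2) K2_def g_def M0_def N2_def by auto
          then show ?thesis using xy by simp
        qed
      qed
      moreover have "\<forall>C\<in>K. g C \<in> N C" using f1(2) f2(2) unfolding g_def K2_def N2_def by auto
      ultimately show ?thesis by blast
    qed
  qed
qed

lemma hall:
  assumes "finite K" "\<forall>C\<in>K. finite (N C)" "\<forall>S\<subseteq>K. card S \<le> card (\<Union>(N ` S))"
  shows "\<exists>f. inj_on f K \<and> (\<forall>C\<in>K. f C \<in> N C)"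
  using hall_aux[OF refl assms] .



lemma sym_form:
  assumes "transpose A = A"
  shows "y \<bullet> (A *v x) = x \<bullet> (A *v (y::real^'n))"
proof -
  have "y v* A = A *v y" using vector_transpose_matrix[of y A] assms by simp
  then show ?thesis using dot_lmul_matrix[of y A x] by (simp add: inner_commute)
qed

lemma quad_add:
  assumes "transpose A = A"
  shows "(x + y) \<bullet> (A *v (x + y)) = x \<bullet> (A *v x) + 2 * (y \<bullet> (A *v x)) + y \<bullet> (A *v (y::real^'n))"
  using sym_form[OF assms, of x y] by (simp add: matrix_vector_right_distrib inner_add_left inner_add_right)

lemma sum_supp:
  fixes x :: "real^'n"
  assumes "supp x \<subseteq> J"
  shows "(\<Sum>i\<in>UNIV. g i * x$i) = (\<Sum>i\<in>J. g i * x$i)"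
  by (rule sum.mono_neutral_right) (use assms in \<open>auto simp: supp_def\<close>)

lemma Av_supp:
  fixes x :: "real^'n"
  assumes "supp x \<subseteq> J"
  shows "(A *v x)$i = (\<Sum>l\<in>J. A$i$l * x$l)"
  using sum_supp[OF assms, of "\<lambda>l. A$i$l"] by (simp add: matrix_vector_mult_def)

lemma inner_supp:
  fixes x :: "real^'n"
  assumes "supp x \<subseteq> J"
  shows "y \<bullet> x = (\<Sum>i\<in>J. y$i * x$i)"
  using sum_supp[OF assms, of "\<lambda>l. y$l"] by (simp add: inner_vec_def)

lemma zero_Au_nonneg:
  fixes A :: "real^'n^'n"
  assumes cop: "copositive A" and diag: "\<forall>i. A$i$i = 1" and z: "is_zero A u"
  shows "0 \<le> (A *v u)$k"
proof (rule ccontr)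
  define b where "b = (A *v u)$k"
  assume "\<not> 0 \<le> (A *v u)$k"
  then have b: "b < 0" by (simp add: b_def)
  define y where "y = (- b) *\<^sub>R axis k (1::real)"
  have sym: "transpose A = A" using cop unfolding copositive_def by (rule conjunct1)
  have nn: "\<forall>i. 0 \<le> (u + y)$i"
  proof
    fix i
    have "0 \<le> u$i" using z unfolding is_zero_def by blast
    then show "0 \<le> (u + y)$i" using b unfolding y_def axis_def by (cases "i = k") auto
  qed
  have "(u + y) \<bullet> (A *v (u + y)) = u \<bullet> (A *v u) + 2 * (y \<bullet> (A *v u)) + y \<bullet> (A *v y)" by (rule quad_add[OF sym])
  also have "u \<bullet> (A *v u) = 0" using z is_zero_def by blast
  also have "y \<bullet> (A *v u) = - b * b" unfolding y_def b_def by (simp add: inner_axis')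
  also have "y \<bullet> (A *v y) = b * b"
  proof -
    have "A *v y = (- b) *\<^sub>R (A *v axis k 1)" unfolding y_def by (rule matrix_vector_mult_scaleR)
    then have "y \<bullet> (A *v y) = b * b * (axis k 1 \<bullet> (A *v axis k 1))" unfolding y_def
      by (simp only: inner_scaleR_left inner_scaleR_right)
    also have "axis k 1 \<bullet> (A *v axis k 1) = 1" using diag
      by (simp add: matrix_vector_mult_basis column_def inner_axis')
    finally show ?thesis by simp
  qed
  finally have "(u + y) \<bullet> (A *v (u + y)) = - (b * b)" by simp
  moreover have "b * b > 0" using b by (simp add: mult_neg_neg)
  ultimately have "(u + y) \<bullet> (A *v (u + y)) < 0" by simp
  moreover have "0 \<le> (u + y) \<bullet> (A *v (u + y))" 
  proof -
    have "\<forall>x::real^'n. (\<forall>i. 0 \<le> x$i) \<longrightarrow> 0 \<le> x \<bullet> (A *v x)" using cop unfolding copositive_def by (rule conjunct2)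
    then show ?thesis using nn by blast
  qed
  ultimately show False by linarith
qed

lemma zero_Au_supp:
  assumes cop: "copositive A" and diag: "\<forall>i. A$i$i = 1" and z: "is_zero A u" and k: "u$k \<noteq> 0"
  shows "(A *v u)$k = 0"
proof -
  have nn: "\<And>i. 0 \<le> u$i * (A *v u)$i"
    using z zero_Au_nonneg[OF cop diag z] unfolding is_zero_def by simp
  have "(\<Sum>i\<in>UNIV. u$i * (A *v u)$i) = 0" using z unfolding is_zero_def by (simp add: inner_vec_def)
  then have "\<forall>i\<in>UNIV. u$i * (A *v u)$i = 0" using nn by (subst sum_nonneg_eq_0_iff[symmetric]) auto
  then show ?thesis using k by simp blast
qed

lemma zero_cross:
  assumes cop: "copositive A" and diag: "\<forall>i. A$i$i = 1" and z: "is_zero A u"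
    and s: "supp v \<subseteq> supp u"
  shows "v \<bullet> (A *v u) = 0"
proof -
  have "\<forall>i. v$i * (A *v u)$i = 0"
  proof
    fix i show "v$i * (A *v u)$i = 0"
    proof (cases "v$i = 0")
      case False then have "u$i \<noteq> 0" using s by (auto simp: supp_def)
      then show ?thesis using zero_Au_supp[OF cop diag z] by simp
    qed simp
  qed
  then have "(\<Sum>i\<in>UNIV. v$i * (A *v u)$i) = 0" by (intro sum.neutral) blast
  then show ?thesis by (simp add: inner_vec_def)
qed

lemma minimal_prop:
  assumes cop: "copositive A" and diag: "\<forall>i. A$i$i = 1"
    and u: "u \<in> minimal_zeros A" and v: "v \<in> minimal_zeros A" and s: "supp u = supp v"
  shows "\<exists>t. u = t *\<^sub>R v"
proof -
  have zu: "is_zero A u" and zv: "is_zero A v" and minu: "\<not> (\<exists>w. is_zero A w \<and> supp w \<subset> supp u)"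
    using u v unfolding minimal_zeros_def by auto
  have sym: "transpose A = A" using cop unfolding copositive_def by (rule conjunct1)
  define I where "I = supp v"
  have fI: "finite I" by simp
  have Ine: "I \<noteq> {}" using zv unfolding is_zero_def I_def supp_def by (auto simp: vec_eq_iff)
  have posu: "\<And>i. i \<in> I \<Longrightarrow> u$i > 0" using zu s unfolding I_def is_zero_def supp_def
    by (metis dual_order.order_iff_strict mem_Collect_eq)
  have posv: "\<And>i. i \<in> I \<Longrightarrow> v$i > 0" using zv unfolding I_def is_zero_def supp_def
    by (metis dual_order.order_iff_strict mem_Collect_eq)
  define t where "t = Min ((\<lambda>i. u$i / v$i) ` I)"
  have "t \<in> (\<lambda>i. u$i / v$i) ` I" unfolding t_def by (rule Min_in) (use fI Ine in auto)
  then obtain i0 where i0: "i0 \<in> I" "t = u$i0 / v$i0" by auto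
  define w where "w = u + (- t) *\<^sub>R v"
  have tle: "\<And>i. i \<in> I \<Longrightarrow> t * v$i \<le> u$i"
  proof -
    fix i assume i: "i \<in> I"
    have "t \<le> u$i / v$i" unfolding t_def using fI i by auto
    then show "t * v$i \<le> u$i" using posv[OF i] by (simp add: le_divide_eq)
  qed
  have wnn: "\<forall>i. 0 \<le> w$i"
  proof
    fix i show "0 \<le> w$i"
    proof (cases "i \<in> I")
      case True then show ?thesis using tle[OF True] unfolding w_def by simp
    next
      case False then have "u$i = 0" "v$i = 0" using s unfolding I_def supp_def by auto
      then show ?thesis unfolding w_def by simp
    qed
  qed
  have wi0: "w$i0 = 0" unfolding w_def using i0 posv[OF i0(1)] by simp
  have "w \<bullet> (A *v w) = u \<bullet> (A *v u) + 2 * (((- t) *\<^sub>R v) \<bullet> (A *v u)) + ((- t) *\<^sub>R v) \<bullet> (A *v ((- t) *\<^sub>R v))"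
    unfolding w_def by (rule quad_add[OF sym])
  also have "\<dots> = 0"
  proof -
    have a: "((- t) *\<^sub>R v) \<bullet> (A *v u) = 0" using zero_cross[OF cop diag zu, of v] s
      by (simp only: inner_scaleR_left mult_zero_right)
    have "A *v ((- t) *\<^sub>R v) = (- t) *\<^sub>R (A *v v)" by (rule matrix_vector_mult_scaleR)
    then have b: "((- t) *\<^sub>R v) \<bullet> (A *v ((- t) *\<^sub>R v)) = 0" using zv
      by (simp only: inner_scaleR_left inner_scaleR_right is_zero_def)
    have c: "u \<bullet> (A *v u) = 0" using zu is_zero_def by blast
    show ?thesis by (simp only: a b c mult_zero_right add_0)
  qed
  finally have Qw: "w \<bullet> (A *v w) = 0" .
  have sw: "supp w \<subseteq> supp u"
  proof
    fix i assume i: "i \<in> supp w"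
    show "i \<in> supp u"
    proof (rule ccontr)
      assume "i \<notin> supp u"
      then have "u$i = 0" "v$i = 0" using s unfolding supp_def by auto
      then have "w$i = 0" unfolding w_def by simp
      then show False using i unfolding supp_def by simp
    qed
  qed
  have "i0 \<in> supp u" "i0 \<notin> supp w" using i0(1) s wi0 unfolding I_def supp_def by auto
  then have ssub: "supp w \<subset> supp u" using sw by blast
  have "w = 0"
  proof (rule ccontr)
    assume "w \<noteq> 0"
    then have "is_zero A w" using wnn Qw by (simp add: is_zero_def)
    then show False using minu ssub by blast
  qed
  then have "u = t *\<^sub>R v" unfolding w_def by (simp add: algebra_simps)
  then show ?thesis by blast
qed

lemma zero_card_ge2:
  assumes cop: "copositive A" and diag: "\<forall>i. A$i$i = 1" and z: "is_zero A u"
  shows "card (supp u) \<ge> 2"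
proof (rule ccontr)
  assume "\<not> card (supp u) \<ge> 2"
  then have "card (supp u) = 0 \<or> card (supp u) = 1" by linarith
  moreover have "supp u \<noteq> {}" using z unfolding is_zero_def supp_def by (auto simp: vec_eq_iff)
  ultimately obtain i where i: "supp u = {i}" by (auto simp: card_1_singleton_iff)
  then have "(A *v u)$i = A$i$i * u$i" using Av_supp[of u "{i}" A i] by simp
  also have "\<dots> = u$i" using diag by simp
  finally have "(A *v u)$i \<noteq> 0" using i by (auto simp: supp_def)
  moreover have "u$i \<noteq> 0" using i by (auto simp: supp_def)
  ultimately show False using zero_Au_supp[OF cop diag z] by blast
qed

lemma zero_card2_eq:
  assumes cop: "copositive A" and diag: "\<forall>i. A$i$i = 1" and z: "is_zero A u"
    and s: "supp u = {i, j}" and ij: "i \<noteq> j"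
  shows "u$i = u$j"
proof -
  have sym: "transpose A = A" using cop unfolding copositive_def by (rule conjunct1)
  then have aji: "A$j$i = A$i$j" 
  proof -
    have "transpose A $ i $ j = A $ j $ i" by (simp add: transpose_def)
    then show ?thesis using sym by simp
  qed
  have ui: "u$i > 0" and uj: "u$j > 0" using z s unfolding is_zero_def supp_def
    by (metis dual_order.order_iff_strict insertCI mem_Collect_eq)+
  have "(A *v u)$i = A$i$i * u$i + A$i$j * u$j" using Av_supp[of u "{i,j}" A i] s ij by simp
  then have e1: "u$i + A$i$j * u$j = 0" using diag zero_Au_supp[OF cop diag z, of i] ui by simp
  have "(A *v u)$j = A$j$i * u$i + A$j$j * u$j" using Av_supp[of u "{i,j}" A j] s ij by simp
  then have e2: "A$i$j * u$i + u$j = 0" using diag zero_Au_supp[OF cop diag z, of j] uj aji by simp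
  have "(u$i - u$j) * (1 - A$i$j) = 0" using e1 e2 by (simp add: algebra_simps)
  moreover have "A$i$j \<noteq> 1"
  proof
    assume "A$i$j = 1"
    with e1 have "u$i + u$j = 0" by simp
    with ui uj show False by linarith
  qed
  ultimately have "u$i - u$j = 0" by (metis mult_eq_0_iff right_minus_eq)
  then show ?thesis by simp
qed



lemma G2_adj_sym: "G2_adj I i j = G2_adj I j i"
  unfolding G2_adj_def by (simp add: insert_commute)

lemma G2_rtc_sym: "(G2_adj I)\<^sup>*\<^sup>* a b \<Longrightarrow> (G2_adj I)\<^sup>*\<^sup>* b a"
proof (induction rule: rtranclp.induct)
  case (rtrancl_refl a) then show ?case by simp
next
  case (rtrancl_into_rtrancl a b c)
  have "G2_adj I c b" using rtrancl_into_rtrancl.hyps(2) G2_adj_sym by metis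
  then show ?case using rtrancl_into_rtrancl.IH by (rule converse_rtranclp_into_rtranclp)
qed

lemma G2_comp_closed:
  "x \<in> G2_component I v \<Longrightarrow> G2_adj I x y \<Longrightarrow> y \<in> G2_component I v"
  unfolding G2_component_def by (auto intro: rtranclp.rtrancl_into_rtrancl)

lemma G2_comp_self: "v \<in> G2_component I v"
  unfolding G2_component_def by simp

lemma G2_comp_eq:
  assumes "x \<in> G2_component I v"
  shows "G2_component I x = G2_component I v"
proof -
  have xv: "(G2_adj I)\<^sup>*\<^sup>* v x" using assms G2_component_def by fastforce
  then have vx: "(G2_adj I)\<^sup>*\<^sup>* x v" by (rule G2_rtc_sym)
  show ?thesis unfolding G2_component_def
    using xv vx by (auto intro: rtranclp_trans)
qed

lemma G2_comps_disjoint: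
  assumes "C \<in> G2_components I" "D \<in> G2_components I" "C \<noteq> D"
  shows "C \<inter> D = {}"
proof (rule ccontr)
  assume "C \<inter> D \<noteq> {}"
  then obtain x where x: "x \<in> C" "x \<in> D" by blast
  obtain v w where "C = G2_component I v" "D = G2_component I w"
    using assms unfolding G2_components_def by auto
  then show False using x G2_comp_eq assms(3) by metis
qed



theorem lemma5p2:
  fixes A :: "real^'n^'n"
  assumes "copositive A"
    and "\<forall>i. A$i$i = 1"
    and "span (minimal_zeros A) = UNIV"
  shows "\<exists>w :: 'n set \<Rightarrow> 'n set.
           inj_on w (G2_bipartite_components (supp_minimal_zeros A)) \<and>
           (\<forall>C \<in> G2_bipartite_components (supp_minimal_zeros A).
              w C \<in> supp_minimal_zeros A \<and> card (w C) > 2 \<and> (\<exists>v \<in> C. v \<in> w C))"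
proof -
  note cop = assms(1) and diag = assms(2)
  define I where "I = supp_minimal_zeros A"
  define K where "K = G2_bipartite_components I"
  define col where "col = (\<lambda>C. SOME c::'n\<Rightarrow>bool. \<forall>i\<in>C. \<forall>j\<in>C. G2_adj I i j \<longrightarrow> c i \<noteq> c j)"
  define z where "z = (\<lambda>C. (\<chi> i. if i \<in> C then (if col C i then 1 else -1) else 0) :: real^'n)"
  define N where "N = (\<lambda>C. {J \<in> I. 2 < card J \<and> J \<inter> C \<noteq> {}})"
  have colK: "\<And>C i j. C \<in> K \<Longrightarrow> i \<in> C \<Longrightarrow> j \<in> C \<Longrightarrow> G2_adj I i j \<Longrightarrow> col C i \<noteq> col C j"
  proof -
    fix C i j assume C: "C \<in> K" and ij: "i \<in> C" "j \<in> C" "G2_adj I i j"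
    have "\<exists>c::'n\<Rightarrow>bool. \<forall>i\<in>C. \<forall>j\<in>C. G2_adj I i j \<longrightarrow> c i \<noteq> c j"
      using C unfolding K_def G2_bipartite_components_def G2_bipartite_def by blast
    then have "\<forall>i\<in>C. \<forall>j\<in>C. G2_adj I i j \<longrightarrow> col C i \<noteq> col C j"
      unfolding col_def by (rule someI_ex)
    then show "col C i \<noteq> col C j" using ij by blast
  qed
  have compK: "\<And>C. C \<in> K \<Longrightarrow> C \<in> G2_components I"
    unfolding K_def G2_bipartite_components_def by blast
  have zC: "\<And>C i. (z C)$i \<noteq> 0 \<longleftrightarrow> i \<in> C" unfolding z_def by auto
  have zsupp: "\<And>C. supp (z C) = C" unfolding supp_def using zC by blast
  have Cne: "\<And>C. C \<in> K \<Longrightarrow> C \<noteq> {}"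
  proof -
    fix C assume "C \<in> K"
    then obtain v where "C = G2_component I v" using compK unfolding G2_components_def by blast
    then show "C \<noteq> {}" using G2_comp_self by fast
  qed
  have orth: "\<And>C u. C \<in> K \<Longrightarrow> u \<in> minimal_zeros A \<Longrightarrow> supp u \<notin> N C \<Longrightarrow> z C \<bullet> u = 0"
  proof -
    fix C u assume C: "C \<in> K" and u: "u \<in> minimal_zeros A" and nN: "supp u \<notin> N C"
    have zu: "is_zero A u" using u unfolding minimal_zeros_def by blast
    have uI: "supp u \<in> I" using u unfolding I_def supp_minimal_zeros_def by blast
    have c2: "card (supp u) \<ge> 2" by (rule zero_card_ge2[OF cop diag zu])
    show "z C \<bullet> u = 0"
    proof (cases "card (supp u) = 2")
      case True
      then obtain i j where ij: "supp u = {i, j}" "i \<noteq> j" by (auto simp: card_2_iff)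
      have adj: "G2_adj I i j" using uI ij True unfolding G2_adj_def by simp
      have adj': "G2_adj I j i" using adj G2_adj_sym by metis
      have ueq: "u$i = u$j" by (rule zero_card2_eq[OF cop diag zu ij])
      have inner: "z C \<bullet> u = (z C)$i * u$i + (z C)$j * u$j"
        using inner_supp[of u "{i,j}" "z C"] ij by simp
      obtain v where v: "C = G2_component I v" using compK[OF C] unfolding G2_components_def by auto
      show ?thesis
      proof (cases "i \<in> C")
        case iC: True
        then have jC: "j \<in> C" using G2_comp_closed adj v by metis
        have "col C i \<noteq> col C j" using colK[OF C iC jC adj] .
        then have "(z C)$i + (z C)$j = 0" using iC jC unfolding z_def by auto
        then have zz: "(z C)$i + (z C)$j = 0" .
        have "z C \<bullet> u = (z C)$i * u$j + (z C)$j * u$j" using inner ueq by simp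
        also have "\<dots> = ((z C)$i + (z C)$j) * u$j" by (rule distrib_right[symmetric])
        also have "\<dots> = 0" using zz by simp
        finally show ?thesis .
      next
        case iC: False
        then have jC: "j \<notin> C" using G2_comp_closed adj' v by metis
        then have "(z C)$i = 0" "(z C)$j = 0" using iC zC by blast+
        then show ?thesis using inner by simp
      qed
    next
      case False
      then have "card (supp u) > 2" using c2 by simp
      have "supp u \<inter> C = {}"
      proof (rule ccontr)
        assume "supp u \<inter> C \<noteq> {}"
        then have "supp u \<in> N C" using uI \<open>card (supp u) > 2\<close> unfolding N_def by simp
        then show False using nN by contradiction
      qed
      have "\<forall>i\<in>supp u. (z C)$i * u$i = 0"
      proof
        fix i assume "i \<in> supp u"
        then have "i \<notin> C" using \<open>supp u \<inter> C = {}\<close> by blast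
        then have "(z C)$i = 0" using zC by blast
        then show "(z C)$i * u$i = 0" by simp
      qed
      then have "(\<Sum>i\<in>supp u. (z C)$i * u$i) = 0" by (rule sum.neutral)
      then show ?thesis using inner_supp[of u "supp u" "z C"] by simp
    qed
  qed
  have finK: "finite K" by (rule finite_subset[OF subset_UNIV]) simp
  have finN: "\<forall>C\<in>K. finite (N C)" by (auto intro: finite_subset[OF subset_UNIV])
  have hallc: "\<forall>S\<subseteq>K. card S \<le> card (\<Union>(N ` S))"
  proof (intro allI impI)
    fix S assume S: "S \<subseteq> K"
    define M where "M = \<Union>(N ` S)"
    have finM: "finite M" by (rule finite_subset[OF subset_UNIV]) simp
    have MI: "M \<subseteq> I" unfolding M_def N_def by auto
    define r where "r = (\<lambda>J. SOME u. u \<in> minimal_zeros A \<and> supp u = J)"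
    have r: "\<And>J. J \<in> M \<Longrightarrow> r J \<in> minimal_zeros A \<and> supp (r J) = J"
    proof -
      fix J assume "J \<in> M"
      then have "\<exists>u. u \<in> minimal_zeros A \<and> supp u = J" using MI unfolding I_def supp_minimal_zeros_def by auto
      then show "r J \<in> minimal_zeros A \<and> supp (r J) = J" unfolding r_def by (rule someI_ex)
    qed
    define U0 where "U0 = {u \<in> minimal_zeros A. supp u \<notin> M}"
    define U1 where "U1 = r ` M"
    have "minimal_zeros A \<subseteq> span (U0 \<union> U1)"
    proof
      fix u assume u: "u \<in> minimal_zeros A"
      show "u \<in> span (U0 \<union> U1)"
      proof (cases "supp u \<in> M")
        case True
        then have rr: "r (supp u) \<in> minimal_zeros A" "supp u = supp (r (supp u))" using r by auto
        obtain t where "u = t *\<^sub>R r (supp u)" using minimal_prop[OF cop diag u rr] by blast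
        moreover have "r (supp u) \<in> U0 \<union> U1" using True U1_def by auto
        ultimately show ?thesis using span_mul[OF span_base, of "r (supp u)" "U0 \<union> U1" t] by simp
      next
        case False then have "u \<in> U0" using u U0_def by auto
        then show ?thesis by (simp add: span_base)
      qed
    qed
    then have "span (minimal_zeros A) \<subseteq> span (U0 \<union> U1)"
      by (metis span_mono span_span)
    then have spanU: "span (U0 \<union> U1) = UNIV" using assms(3) by auto
    have dimU: "dim (U0 \<union> U1) = CARD('n)"
    proof -
      have "dim (U0 \<union> U1) = dim (span (U0 \<union> U1))" by simp
      also have "\<dots> = dim (UNIV :: (real^'n) set)" using spanU by simp
      finally show ?thesis by simp
    qed
    obtain B0 where B0: "B0 \<subseteq> U0" "independent B0" "U0 \<subseteq> span B0" "card B0 = dim U0"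
      by (rule basis_exists)
    have finB0: "finite B0" using B0(2) by (rule finiteI_independent)
    have finU1: "finite U1" unfolding U1_def using finM by simp
    have "U0 \<union> U1 \<subseteq> span (B0 \<union> U1)"
    proof -
      have "U0 \<subseteq> span (B0 \<union> U1)" using B0(3) span_mono[of B0 "B0 \<union> U1"] by auto
      moreover have "U1 \<subseteq> span (B0 \<union> U1)" by (auto intro: span_base)
      ultimately show ?thesis by blast
    qed
    then have "dim (U0 \<union> U1) \<le> card (B0 \<union> U1)" using finB0 finU1 by (intro dim_le_card) auto
    also have "\<dots> \<le> card B0 + card U1" by (rule card_Un_le)
    finally have ineq1: "CARD('n) \<le> dim U0 + card U1" using dimU B0(4) by simp
    have cU1: "card U1 \<le> card M" unfolding U1_def using finM by (rule card_image_le)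
    define P where "P = span (z ` S)"
    have dimP: "dim P = card S"
    proof -
      have injz: "inj_on z S"
      proof (rule inj_onI)
        fix C D assume "C \<in> S" "D \<in> S" "z C = z D"
        then show "C = D" using zsupp by metis
      qed
      have pw: "pairwise orthogonal (z ` S)"
      proof (clarsimp simp: pairwise_def)
        fix C D assume CD: "C \<in> S" "D \<in> S" "z C \<noteq> z D"
        then have "C \<noteq> D" by auto
        then have disj: "C \<inter> D = {}" using G2_comps_disjoint compK CD S by blast
        have "\<forall>i. (z C)$i * (z D)$i = 0" using disj zC by (metis disjoint_iff mult_eq_0_iff)
        then have "(\<Sum>i\<in>UNIV. (z C)$i * (z D)$i) = 0" by (intro sum.neutral) blast
        then have "z C \<bullet> z D = 0" by (simp add: inner_vec_def)
        then show "orthogonal (z C) (z D)" by (simp add: orthogonal_def)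
      qed
      have z0: "0 \<notin> z ` S"
      proof
        assume "0 \<in> z ` S"
        then obtain C where C: "C \<in> S" "z C = 0" by auto
        then have "C \<noteq> {}" using Cne S by blast
        then obtain i where "i \<in> C" by blast
        then have "(z C)$i \<noteq> 0" using zC by blast
        then show False using C(2) by simp
      qed
      have "independent (z ` S)" using pw z0 by (rule pairwise_orthogonal_independent)
      then have "dim (z ` S) = card (z ` S)" by (rule dim_eq_card_independent)
      then show ?thesis unfolding P_def using injz by (simp add: card_image)
    qed
    have "dim {y \<in> UNIV. \<forall>x \<in> P. orthogonal x y} + dim P = dim (UNIV :: (real^'n) set)"
      by (rule dim_subspace_orthogonal_to_vectors) (auto simp: P_def subspace_span)
    then have ortheq: "dim {y \<in> UNIV. \<forall>x \<in> P. orthogonal x y} + card S = CARD('n)"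
      using dimP by simp
    have "U0 \<subseteq> {y \<in> UNIV. \<forall>x \<in> P. orthogonal x y}"
    proof -
      have "orthogonal x u" if u: "u \<in> U0" and x: "x \<in> P" for u x
      proof -
      have "orthogonal u x" unfolding P_def
      proof (rule orthogonal_to_span)
        show "x \<in> span (z ` S)" using x P_def by simp
        fix y assume "y \<in> z ` S"
        then obtain C where C: "C \<in> S" "y = z C" by auto
        have "supp u \<notin> N C" using u C(1) unfolding U0_def M_def by auto
        then have "z C \<bullet> u = 0" using orth C(1) S u U0_def by auto
        then show "orthogonal u y" using C(2) by (simp add: orthogonal_def inner_commute)
      qed
      then show "orthogonal x u" by (simp add: orthogonal_commute)
      qed
      then show ?thesis by blast
    qed
    then have "dim U0 \<le> dim {y \<in> UNIV. \<forall>x \<in> P. orthogonal x y}" by (rule dim_subset)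
    then have "card S \<le> card M" using ineq1 cU1 ortheq by linarith
    then show "card S \<le> card (\<Union>(N ` S))" unfolding M_def .
  qed
  obtain f where f: "inj_on f K" "\<forall>C\<in>K. f C \<in> N C"
    using hall[OF finK finN hallc] by blast
  show ?thesis
  proof (intro exI conjI ballI)
    show "inj_on f (G2_bipartite_components (supp_minimal_zeros A))" using f(1) K_def I_def by simp
  next
    fix C assume "C \<in> G2_bipartite_components (supp_minimal_zeros A)"
    then have "f C \<in> N C" using f(2) K_def I_def by simp
    then show "f C \<in> supp_minimal_zeros A" "card (f C) > 2" "\<exists>v\<in>C. v \<in> f C"
      unfolding N_def I_def by auto
  qed
qed


end
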